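(* Let $m>0$, $n$ an odd positive integer, $V=[-m/2,m/2]$. For every $D\in\mathcal{CTM}$ and every $j\in\{-\lceil n/2\rceil+1,\dots,0,\dots,n-\lceil n/2\rceil\}$, $$|x_{\lceil n/2\rceil}-x_{\lceil n/2\rceil+j}|\le |j|\cdot\frac{m}{\lceil n/2\rceil-1}.$$
   Context: A dataset is $D=(x_1,\dots,x_n)\in V^n$, indexed so that $x_1\le\dots\le x_n$. $\mathcal{CTM}$ is the set of datasets with $|x_{i+1}-x_i|\ge|x_{j+1}-x_j|$ for all $1\le i<j\le\lceil n/2\rceil-1$ and $|x_i-x_{i-1}|\ge|x_j-x_{j-1}|$ for all $\lceil n/2\rceil+1\le j<i\le n$. *)

theory Defs
  imports Complex_Main
begin

text \<open>A dataset of size n is represented as a function x :: nat => real, with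
  entries x 1, ..., x n (other indices are irrelevant).\<close>

definition half_ceil :: "nat \<Rightarrow> nat" where
  "half_ceil n = nat \<lceil>real n / 2\<rceil>"

definition dataset :: "real set \<Rightarrow> nat \<Rightarrow> (nat \<Rightarrow> real) \<Rightarrow> bool" where
  "dataset V n x \<longleftrightarrow> (\<forall>i\<in>{1..n}. x i \<in> V) \<and> (\<forall>i j. 1 \<le> i \<longrightarrow> i \<le> j \<longrightarrow> j \<le> n \<longrightarrow> x i \<le> x j)"

definition CTM :: "real set \<Rightarrow> nat \<Rightarrow> (nat \<Rightarrow> real) \<Rightarrow> bool" where
  "CTM V n x \<longleftrightarrow> dataset V n x \<and>
     (\<forall>i j. 1 \<le> i \<longrightarrow> i < j \<longrightarrow> j \<le> half_ceil n - 1 \<longrightarrow>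
        \<bar>x (i+1) - x i\<bar> \<ge> \<bar>x (j+1) - x j\<bar>) \<and>
     (\<forall>i j. half_ceil n + 1 \<le> j \<longrightarrow> j < i \<longrightarrow> i \<le> n \<longrightarrow>
        \<bar>x i - x (i-1)\<bar> \<ge> \<bar>x j - x (j-1)\<bar>)"

end

theory Submission
  imports Defs
begin

lemma avg_split:
  fixes f :: "nat \<Rightarrow> real"
  assumes "L \<inter> F = {}" "L \<union> F = {..<N}"
    and le: "\<And>a b. a \<in> L \<Longrightarrow> b \<in> F \<Longrightarrow> f a \<le> f b"
  shows "real N * sum f L \<le> real (card L) * sum f {..<N}"
proof -
  have fin: "finite L" "finite F" using assms(2)
    by (metis finite_Un finite_lessThan)+
  have "real (card F) * sum f L = (\<Sum>a\<in>L. \<Sum>b\<in>F. f a)"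
    by (simp add: sum_distrib_right mult.commute)
  also have "\<dots> \<le> (\<Sum>a\<in>L. \<Sum>b\<in>F. f b)"
    by (intro sum_mono le) auto
  also have "\<dots> = real (card L) * sum f F" by simp
  finally have 1: "real (card F) * sum f L \<le> real (card L) * sum f F" .
  have N: "N = card L + card F"
    using card_Un_disjoint[OF fin assms(1)] assms(2) by simp
  have S: "sum f {..<N} = sum f L + sum f F"
    using sum.union_disjoint[OF fin assms(1)] assms(2) by simp
  have N': "real N = real (card L) + real (card F)" using N by simp
  show ?thesis using 1 unfolding N' S by (simp add: algebra_simps)
qed

lemma hc: "half_ceil (2*p+1) = p+1"
proof -
  have "\<lceil>real (2*p+1) / 2\<rceil> = int p + 1"
    by (intro ceiling_unique) auto
  thus ?thesis unfolding half_ceil_def by simp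
qed

theorem lemma7p11:
  fixes m :: real and n :: nat and x :: "nat \<Rightarrow> real" and j :: int
  assumes "m > 0" and "odd n" and "n > 0"
    and "CTM {-m/2..m/2} n x"
    and "- int (half_ceil n) + 1 \<le> j" and "j \<le> int n - int (half_ceil n)"
  shows "\<bar>x (half_ceil n) - x (nat (int (half_ceil n) + j))\<bar>
           \<le> real_of_int \<bar>j\<bar> * (m / (real (half_ceil n) - 1))"
proof -
  obtain p where n: "n = 2*p+1" using assms(2) oddE by blast
  have k: "half_ceil n = p+1" using n hc by simp
  have inV: "\<And>i. 1 \<le> i \<Longrightarrow> i \<le> n \<Longrightarrow> x i \<in> {-m/2..m/2}"
    using assms(4) unfolding CTM_def dataset_def by auto
  have mono: "\<And>i j. 1 \<le> i \<Longrightarrow> i \<le> j \<Longrightarrow> j \<le> n \<Longrightarrow> x i \<le> x j"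
    using assms(4) unfolding CTM_def dataset_def by auto
  have C1: "\<And>i j. 1 \<le> i \<Longrightarrow> i < j \<Longrightarrow> j \<le> p \<Longrightarrow> \<bar>x (i+1) - x i\<bar> \<ge> \<bar>x (j+1) - x j\<bar>"
    using assms(4) unfolding CTM_def k by auto
  have C2: "\<And>i j. p + 2 \<le> j \<Longrightarrow> j < i \<Longrightarrow> i \<le> n \<Longrightarrow> \<bar>x i - x (i-1)\<bar> \<ge> \<bar>x j - x (j-1)\<bar>"
    using assms(4) unfolding CTM_def k by auto
  show ?thesis
  proof (cases "j \<le> 0")
    case True
    define t where "t = nat (-j)"
    have t: "t \<le> p" "j = - int t" using True assms(5) k unfolding t_def by auto
    have idx: "nat (int (half_ceil n) + j) = p + 1 - t" using t k by auto
    define f where "f i = x (i+2) - x (i+1)" for i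
    have "real p * sum f {p-t..<p} \<le> real (card {p-t..<p}) * sum f {..<p}"
    proof (rule avg_split)
      fix a b assume "a \<in> {p-t..<p}" "b \<in> {..<p-t}"
      hence ab: "b < a" "a < p" by auto
      have "\<bar>x (b+1+1) - x (b+1)\<bar> \<ge> \<bar>x (a+1+1) - x (a+1)\<bar>"
        by (rule C1) (use ab in auto)
      moreover have "x (a+1) \<le> x (a+2)" "x (b+1) \<le> x (b+2)"
        using ab by (auto intro!: mono simp: n)
      ultimately show "f a \<le> f b" unfolding f_def by (simp add: numeral_2_eq_2)
    qed auto
    moreover have "sum f {p-t..<p} = x (p+1) - x (p+1-t)"
      using sum_Suc_diff'[of "p-t" p "\<lambda>i. x (i+1)"] t unfolding f_def
      by (simp add: numeral_2_eq_2 Suc_diff_le)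
    moreover have "sum f {..<p} = x (p+1) - x 1"
      using sum_Suc_diff'[of 0 p "\<lambda>i. x (i+1)"] unfolding f_def
      by (simp add: numeral_2_eq_2 atLeast0LessThan)
    moreover have "x (p+1) - x 1 \<le> m" using inV[of "p+1"] inV[of 1] n by auto
    moreover have "x (p+1-t) \<le> x (p+1)" by (rule mono) (use t n in auto)
    ultimately have A: "real p * (x (p+1) - x (p+1-t)) \<le> real t * m"
      "0 \<le> x (p+1) - x (p+1-t)"
    proof -
      assume h: "real p * sum f {p-t..<p} \<le> real (card {p-t..<p}) * sum f {..<p}"
        "sum f {p-t..<p} = x (p+1) - x (p+1-t)" "sum f {..<p} = x (p+1) - x 1"
        "x (p+1) - x 1 \<le> m" "x (p+1-t) \<le> x (p+1)"
      have "real (card {p-t..<p}) * sum f {..<p} \<le> real t * m"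
        using h(3,4) t by (simp add: mult_left_mono)
      moreover have "real p * (x (p+1) - x (p+1-t)) = real p * sum f {p-t..<p}" by (simp add: h(2))
      ultimately show "real p * (x (p+1) - x (p+1-t)) \<le> real t * m" using h(1) by linarith
      show "0 \<le> x (p+1) - x (p+1-t)" using h(5) by linarith
    qed
    show ?thesis
    proof (cases "p = 0")
      case True thus ?thesis using t by simp
    next
      case False
      hence "x (p+1) - x (p+1-t) \<le> real t * m / real p" using A
        by (simp add: field_simps)
      thus ?thesis using A t idx k by simp
    qed
  next
    case False
    define t where "t = nat j"
    have t: "t \<le> p" "j = int t" using False assms(6) k n unfolding t_def by auto
    have idx: "nat (int (half_ceil n) + j) = p + 1 + t" using t k by auto
    define f where "f i = x (p+2+i) - x (p+1+i)" for i
    have "real p * sum f {..<t} \<le> real (card {..<t}) * sum f {..<p}"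
    proof (rule avg_split)
      fix a b assume "a \<in> {..<t}" "b \<in> {t..<p}"
      hence ab: "a < b" "b < p" using t by auto
      have "\<bar>x (p+2+b) - x (p+2+b-1)\<bar> \<ge> \<bar>x (p+2+a) - x (p+2+a-1)\<bar>"
        by (rule C2) (use ab n in auto)
      moreover have "x (p+1+a) \<le> x (p+2+a)" "x (p+1+b) \<le> x (p+2+b)"
        using ab by (auto intro!: mono simp: n)
      ultimately show "f a \<le> f b" unfolding f_def by simp
    qed (use t in auto)
    moreover have "sum f {..<t} = x (p+1+t) - x (p+1)"
      using sum_Suc_diff'[of 0 t "\<lambda>i. x (p+1+i)"] unfolding f_def
      by (simp add: atLeast0LessThan)
    moreover have "sum f {..<p} = x (p+1+p) - x (p+1)"
      using sum_Suc_diff'[of 0 p "\<lambda>i. x (p+1+i)"] unfolding f_def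
      by (simp add: atLeast0LessThan)
    moreover have "x (p+1+p) - x (p+1) \<le> m" using inV[of "p+1+p"] inV[of "p+1"] n by auto
    moreover have "x (p+1) \<le> x (p+1+t)" by (rule mono) (use t n in auto)
    ultimately have A: "real p * (x (p+1+t) - x (p+1)) \<le> real t * m"
      "0 \<le> x (p+1+t) - x (p+1)"
    proof -
      assume h: "real p * sum f {..<t} \<le> real (card {..<t}) * sum f {..<p}"
        "sum f {..<t} = x (p+1+t) - x (p+1)" "sum f {..<p} = x (p+1+p) - x (p+1)"
        "x (p+1+p) - x (p+1) \<le> m" "x (p+1) \<le> x (p+1+t)"
      have "real (card {..<t}) * sum f {..<p} \<le> real t * m"
        using h(3,4) t by (simp add: mult_left_mono)
      moreover have "real p * (x (p+1+t) - x (p+1)) = real p * sum f {..<t}" by (simp add: h(2))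
      ultimately show "real p * (x (p+1+t) - x (p+1)) \<le> real t * m" using h(1) by linarith
      show "0 \<le> x (p+1+t) - x (p+1)" using h(5) by linarith
    qed
    show ?thesis
    proof (cases "p = 0")
      case True thus ?thesis using t by simp
    next
      case False
      hence "x (p+1+t) - x (p+1) \<le> real t * m / real p" using A
        by (simp add: field_simps)
      thus ?thesis using A t idx k by simp
    qed
  qed
qed

end
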